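(* For an integer $k\ge2$, let $\mathcal{X}_k$ be the set of all multisets $S\subset[0,1]^2$ of size exactly $k$ (counting multiplicity), equipped with $$\mathrm{EMD}(S,T)=\min_{\pi:S\to T}\frac1k\sum_{s\in S}\|s-\pi(s)\|_2,$$ the minimum over bijections $\pi$ between the multisets. Then $\mathrm{diam}(\mathcal{X}_k)\le\sqrt2$, and there is an absolute constant $C$ such that $\mathrm{ddim}(\mathcal{X}_k)\le Ck\log k$ for all $k\ge2$.
   Context: The doubling constant $\lambda$ of a metric space is the smallest number such that every ball can be covered by $\lambda$ balls of half the radius; the doubling dimension is $\mathrm{ddim}=\log_2\lambda$. *)

theory Defs
  imports "HOL-Analysis.Analysis" "HOL-Library.Multiset"
begin

text \<open>Points of the plane are pairs of reals; the product norm on real \<times> real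
  is the Euclidean norm, so dist is the Euclidean distance.\<close>

definition unit_square :: "(real \<times> real) set" where
  "unit_square = {0..1} \<times> {0..1}"

definition Xk :: "nat \<Rightarrow> (real \<times> real) multiset set" where
  "Xk k = {S. size S = k \<and> set_mset S \<subseteq> unit_square}"

text \<open>A bijection between multisets is the same as a pair of
  listings xs, ys of S, T matched position-wise.\<close>
definition EMD :: "nat \<Rightarrow> (real \<times> real) multiset \<Rightarrow> (real \<times> real) multiset \<Rightarrow> real" where
  "EMD k S T = Min {(1 / real k) * (\<Sum>i<k. dist (xs ! i) (ys ! i)) | xs ys.
                    mset xs = S \<and> mset ys = T}"

definition mball :: "('a \<Rightarrow> 'a \<Rightarrow> real) \<Rightarrow> 'a set \<Rightarrow> 'a \<Rightarrow> real \<Rightarrow> 'a set" where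
  "mball d X x r = {y \<in> X. d x y \<le> r}"

definition metric_diam :: "('a \<Rightarrow> 'a \<Rightarrow> real) \<Rightarrow> 'a set \<Rightarrow> ereal" where
  "metric_diam d X = (SUP x\<in>X. SUP y\<in>X. ereal (d x y))"

definition doubling_const :: "('a \<Rightarrow> 'a \<Rightarrow> real) \<Rightarrow> 'a set \<Rightarrow> enat" where
  "doubling_const d X = Inf {enat n | n. \<forall>x\<in>X. \<forall>r>0. \<exists>C. C \<subseteq> X \<and> finite C \<and> card C \<le> n \<and>
        mball d X x r \<subseteq> (\<Union>c\<in>C. mball d X c (r / 2))}"

definition doubling_dim :: "('a \<Rightarrow> 'a \<Rightarrow> real) \<Rightarrow> 'a set \<Rightarrow> ereal" where
  "doubling_dim d X = (case doubling_const d X of enat n \<Rightarrow> ereal (log 2 (real n)) | \<infinity> \<Rightarrow> \<infinity>)"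

end

theory Submission
  imports Defs
begin

lemma finite_listings: "finite {xs. mset xs = S}"
proof -
  have "{xs. mset xs = S} \<subseteq> {xs. set xs \<subseteq> set_mset S \<and> length xs = size S}" by auto
  moreover have "finite {xs. set xs \<subseteq> set_mset S \<and> length xs = size S}"
    by (rule finite_lists_length_eq) simp
  ultimately show ?thesis by (rule finite_subset)
qed

lemma EMD_set_finite:
  "finite {(1 / real k) * (\<Sum>i<k. dist (xs ! i) (ys ! i)) | xs ys. mset xs = S \<and> mset ys = T}"
proof -
  have "{(1 / real k) * (\<Sum>i<k. dist (xs ! i) (ys ! i)) | xs ys. mset xs = S \<and> mset ys = T}
     = (\<lambda>(xs,ys). (1 / real k) * (\<Sum>i<k. dist (xs ! i) (ys ! i))) ` ({xs. mset xs = S} \<times> {ys. mset ys = T})"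
    by auto
  moreover have "finite ((\<lambda>(xs,ys). (1 / real k) * (\<Sum>i<k. dist (xs ! i) (ys ! i))) ` ({xs. mset xs = S} \<times> {ys. mset ys = T}))"
    by (intro finite_imageI finite_cartesian_product finite_listings)
  ultimately show ?thesis by simp
qed

lemma EMD_le:
  assumes "mset xs = S" "mset ys = T"
  shows "EMD k S T \<le> (1 / real k) * (\<Sum>i<k. dist (xs ! i) (ys ! i))"
  unfolding EMD_def
  by (rule Min_le[OF EMD_set_finite]) (use assms in blast)

lemma EMD_attained:
  "\<exists>xs ys. mset xs = S \<and> mset ys = T \<and> EMD k S T = (1 / real k) * (\<Sum>i<k. dist (xs ! i) (ys ! i))"
proof -
  obtain xs ys where "mset xs = S" "mset ys = T" using ex_mset by metis
  hence ne: "{(1 / real k) * (\<Sum>i<k. dist (xs ! i) (ys ! i)) | xs ys. mset xs = S \<and> mset ys = T} \<noteq> {}"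
    by blast
  have "EMD k S T \<in> {(1 / real k) * (\<Sum>i<k. dist (xs ! i) (ys ! i)) | xs ys. mset xs = S \<and> mset ys = T}"
    unfolding EMD_def by (rule Min_in[OF EMD_set_finite ne])
  thus ?thesis by blast
qed

lemma dist_square: "x \<in> unit_square \<Longrightarrow> y \<in> unit_square \<Longrightarrow> dist x y \<le> sqrt 2"
proof -
  assume a: "x \<in> unit_square" "y \<in> unit_square"
  obtain a1 a2 b1 b2 where x: "x = (a1,a2)" and y: "y = (b1,b2)" by (cases x, cases y) auto
  have h1: "(dist a1 b1)^2 \<le> 1" using a unfolding x y unit_square_def
    by (auto simp: dist_real_def abs_le_square_iff[of "a1-b1" 1, simplified, symmetric] abs_le_iff)
  have h2: "(dist a2 b2)^2 \<le> 1" using a unfolding x y unit_square_def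
    by (auto simp: dist_real_def abs_le_square_iff[of "a2-b2" 1, simplified, symmetric] abs_le_iff)
  show ?thesis unfolding x y dist_Pair_Pair using h1 h2 by (simp add: real_sqrt_le_mono)
qed

lemma diam_part: "metric_diam (EMD k) (Xk k) \<le> ereal (sqrt 2)"
  unfolding metric_diam_def
proof (intro SUP_least)
  fix S T assume S: "S \<in> Xk k" and T: "T \<in> Xk k"
  obtain xs ys where xs: "mset xs = S" and ys: "mset ys = T" using ex_mset by metis
  have lx: "length xs = k" "length ys = k" using S T xs ys unfolding Xk_def by auto
  have "EMD k S T \<le> (1 / real k) * (\<Sum>i<k. dist (xs ! i) (ys ! i))" by (rule EMD_le[OF xs ys])
  also have "\<dots> \<le> (1 / real k) * (\<Sum>i<k. sqrt 2)"
  proof (intro mult_left_mono sum_mono)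
    fix i assume "i \<in> {..<k}"
    hence "xs ! i \<in> set xs" "ys ! i \<in> set ys" using lx by auto
    hence "xs ! i \<in> unit_square" "ys ! i \<in> unit_square" using S T xs ys unfolding Xk_def by auto
    thus "dist (xs ! i) (ys ! i) \<le> sqrt 2" by (rule dist_square)
  qed simp
  also have "\<dots> \<le> sqrt 2" by (cases "k = 0") auto
  finally show "ereal (EMD k S T) \<le> ereal (sqrt 2)" by simp
qed

definition clamp1 :: "real \<Rightarrow> real" where "clamp1 t = max 0 (min 1 t)"
definition clampP :: "real \<times> real \<Rightarrow> real \<times> real" where
  "clampP p = (clamp1 (fst p), clamp1 (snd p))"

lemma clampP_in: "clampP p \<in> unit_square"
  by (auto simp: clampP_def clamp1_def unit_square_def)

lemma clamp1_le: "0 \<le> s \<Longrightarrow> s \<le> 1 \<Longrightarrow> (clamp1 t - s)^2 \<le> (t - s)^2"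
  by (subst abs_le_square_iff[symmetric]) (auto simp: clamp1_def)

lemma clampP_dist: "y \<in> unit_square \<Longrightarrow> dist (clampP p) y \<le> dist p y"
proof -
  assume y: "y \<in> unit_square"
  obtain a1 a2 b1 b2 where x: "p = (a1,a2)" and yy: "y = (b1,b2)" by (cases p, cases y) auto
  have "(clamp1 a1 - b1)^2 \<le> (a1 - b1)^2" "(clamp1 a2 - b2)^2 \<le> (a2 - b2)^2"
    using y unfolding yy unit_square_def by (auto intro!: clamp1_le)
  thus ?thesis unfolding x yy clampP_def dist_Pair_Pair by (simp add: dist_real_def real_sqrt_le_mono)
qed


lemma card_set_mset_le: "card (set_mset M) \<le> size M"
proof -
  obtain xs where "mset xs = M" using ex_mset by metis
  thus ?thesis by (metis card_length set_mset_mset size_mset)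
qed

lemma round_err:
  assumes d: "d > 0"
  shows "\<bar>d * real_of_int (round (v / d)) - v\<bar> \<le> d / 2"
proof -
  define X where "X = real_of_int (round (v / d))"
  have h: "\<bar>X - v / d\<bar> \<le> 1/2" unfolding X_def by (rule of_int_round_abs_le)
  have eq: "d * X - v = d * (X - v / d)" using d by (simp add: right_diff_distrib)
  have "\<bar>d * X - v\<bar> = d * \<bar>X - v / d\<bar>" unfolding eq abs_mult using d by simp
  also have "\<dots> \<le> d * (1/2)" using h d by (intro mult_left_mono) auto
  finally show ?thesis unfolding X_def by simp
qed

lemma round_bound:
  assumes d: "d > 0" and v: "\<bar>v\<bar> \<le> d * real k"
  shows "\<bar>round (v / d)\<bar> \<le> int k + 1"
proof -
  define z where "z = round (v / d)"
  have e1: "\<bar>v / d\<bar> = \<bar>v\<bar> / d" using d by simp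
  have e2: "\<bar>v\<bar> / d \<le> real k" using v d by (simp add: divide_le_eq mult.commute)
  have h: "\<bar>real_of_int z - v / d\<bar> \<le> 1/2" unfolding z_def by (rule of_int_round_abs_le)
  have "\<bar>real_of_int z\<bar> \<le> real k + 1" using e1 e2 h by linarith
  hence "real_of_int \<bar>z\<bar> \<le> real_of_int (int k + 1)" by simp
  hence "\<bar>z\<bar> \<le> int k + 1" by (simp only: of_int_le_iff)
  thus ?thesis unfolding z_def .
qed

lemma cover:
  assumes k: "k \<ge> 1" and S: "S \<in> Xk k" and r: "r > 0"
  shows "\<exists>C. C \<subseteq> Xk k \<and> finite C \<and> card C \<le> k ^ k * (4 * k + 3) ^ (2 * k) \<and>
        mball (EMD k) (Xk k) S r \<subseteq> (\<Union>c\<in>C. mball (EMD k) (Xk k) c (r / 2))"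
proof -
  define d where "d = r / 2"
  have d: "d > 0" using r by (simp add: d_def)
  define R :: int where "R = 2 * int k + 1"
  define Q where "Q = (\<lambda>(a,b). (d * real_of_int a, d * real_of_int b)) ` ({-R..R} \<times> {-R..R})"
  define L where "L = {xs. set xs \<subseteq> set_mset S \<and> length xs = k}"
  define QL where "QL = {qs. set qs \<subseteq> Q \<and> length qs = k}"
  define g where "g = (\<lambda>x q. clampP (fst x + fst q, snd x + snd q))"
  define F where "F = (\<lambda>(xs,qs). mset (map2 g xs qs))"
  define C where "C = F ` (L \<times> QL)"
  have finQ: "finite Q" unfolding Q_def by simp
  have finL: "finite L" unfolding L_def by (rule finite_lists_length_eq) simp
  have finQL: "finite QL" unfolding QL_def by (rule finite_lists_length_eq) (rule finQ)
  have "C \<subseteq> Xk k"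
  proof
    fix c assume "c \<in> C"
    then obtain xs qs where "xs \<in> L" "qs \<in> QL" "c = F (xs,qs)" unfolding C_def by auto
    thus "c \<in> Xk k" unfolding F_def Xk_def L_def QL_def g_def
      by (auto simp: clampP_in)
  qed
  moreover have "finite C" unfolding C_def using finL finQL by simp
  moreover have "card C \<le> k ^ k * (4 * k + 3) ^ (2 * k)"
  proof -
    have "card C \<le> card (L \<times> QL)" unfolding C_def by (rule card_image_le) (simp add: finL finQL)
    also have "\<dots> = card L * card QL" by (rule card_cartesian_product)
    also have "card L = card (set_mset S) ^ k" unfolding L_def by (rule card_lists_length_eq) simp
    also have "card QL = card Q ^ k" unfolding QL_def by (rule card_lists_length_eq) (rule finQ)
    also have "card (set_mset S) \<le> k" using card_set_mset_le[of S] S by (simp add: Xk_def)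
    also have "card Q \<le> (4 * k + 3) ^ 2"
    proof -
      have "card Q \<le> card ({-R..R} \<times> {-R..R})" unfolding Q_def by (rule card_image_le) simp
      also have "\<dots> = nat (2 * R + 1) * nat (2 * R + 1)" by (simp add: card_cartesian_product)
      also have "nat (2 * R + 1) = 4 * k + 3" unfolding R_def by simp
      finally show ?thesis by (simp add: power2_eq_square)
    qed
    hence "card Q ^ k \<le> ((4 * k + 3) ^ 2) ^ k" by (rule power_mono) simp
    hence "card Q ^ k \<le> (4 * k + 3) ^ (2 * k)" by (simp add: power_mult)
    finally show ?thesis by (simp add: mult_le_mono power_mono)
  qed
  moreover have "mball (EMD k) (Xk k) S r \<subseteq> (\<Union>c\<in>C. mball (EMD k) (Xk k) c (r / 2))"
  proof
    fix T assume "T \<in> mball (EMD k) (Xk k) S r"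
    hence T: "T \<in> Xk k" and ST: "EMD k S T \<le> r" unfolding mball_def by auto
    obtain xs ys where xs: "mset xs = S" and ys: "mset ys = T"
      and E: "EMD k S T = (1 / real k) * (\<Sum>i<k. dist (xs ! i) (ys ! i))"
      using EMD_attained by metis
    have lx: "length xs = k" "length ys = k" using S T xs ys unfolding Xk_def by auto
    have ysq: "ys ! i \<in> unit_square" if "i < k" for i
      using that lx T ys unfolding Xk_def by auto
    have kpos: "real k > 0" using k by simp
    have sumb: "(\<Sum>i<k. dist (xs ! i) (ys ! i)) \<le> d * real (2 * k)"
    proof -
      have "(\<Sum>i<k. dist (xs ! i) (ys ! i)) = real k * EMD k S T" using E kpos by simp
      also have "\<dots> \<le> real k * r" using ST kpos by simp
      finally show ?thesis by (simp add: d_def mult.commute)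
    qed
    have termb: "dist (xs ! i) (ys ! i) \<le> d * real (2 * k)" if "i < k" for i
    proof -
      have "dist (xs ! i) (ys ! i) \<le> (\<Sum>i<k. dist (xs ! i) (ys ! i))"
        by (rule member_le_sum) (use that in auto)
      thus ?thesis using sumb by linarith
    qed
    define a where "a = (\<lambda>i. round ((fst (ys ! i) - fst (xs ! i)) / d))"
    define b where "b = (\<lambda>i. round ((snd (ys ! i) - snd (xs ! i)) / d))"
    define qs where "qs = map (\<lambda>i. (d * real_of_int (a i), d * real_of_int (b i))) [0..<k]"
    have lq: "length qs = k" unfolding qs_def by simp
    have abnd: "\<bar>a i\<bar> \<le> R \<and> \<bar>b i\<bar> \<le> R" if "i < k" for i
    proof -
      have "\<bar>fst (ys ! i) - fst (xs ! i)\<bar> \<le> d * real (2 * k)"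
        using dist_fst_le[of "ys ! i" "xs ! i"] termb[OF that] by (simp add: dist_real_def dist_commute)
      moreover have "\<bar>snd (ys ! i) - snd (xs ! i)\<bar> \<le> d * real (2 * k)"
        using dist_snd_le[of "ys ! i" "xs ! i"] termb[OF that] by (simp add: dist_real_def dist_commute)
      ultimately have "\<bar>a i\<bar> \<le> int (2 * k) + 1" "\<bar>b i\<bar> \<le> int (2 * k) + 1"
        unfolding a_def b_def using round_bound[OF d] by blast+
      thus ?thesis unfolding R_def by simp
    qed
    have "qs \<in> QL" unfolding QL_def
    proof safe
      fix q assume "q \<in> set qs"
      then obtain i where i: "i < k" "q = (d * real_of_int (a i), d * real_of_int (b i))"
        unfolding qs_def by auto
      have "(a i, b i) \<in> {-R..R} \<times> {-R..R}" using abnd[OF i(1)] by (simp add: abs_le_iff)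
      thus "q \<in> Q" unfolding Q_def by (rule image_eqI[rotated]) (simp add: i(2))
    qed (rule lq)
    moreover have "xs \<in> L" unfolding L_def using xs lx by auto
    ultimately have cC: "F (xs, qs) \<in> C" unfolding C_def by auto
    define zs where "zs = map2 g xs qs"
    have Fz: "F (xs, qs) = mset zs" unfolding F_def zs_def by simp
    have "EMD k (F (xs, qs)) T \<le> (1 / real k) * (\<Sum>i<k. dist (zs ! i) (ys ! i))"
      unfolding Fz by (rule EMD_le[OF refl ys])
    also have "\<dots> \<le> (1 / real k) * (\<Sum>i<k. d)"
    proof (intro mult_left_mono sum_mono)
      fix i assume "i \<in> {..<k}"
      hence i: "i < k" by simp
      have zi: "zs ! i = clampP (fst (xs ! i) + d * real_of_int (a i), snd (xs ! i) + d * real_of_int (b i))"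
        unfolding zs_def g_def qs_def using i lx by simp
      have e1: "\<bar>d * real_of_int (a i) - (fst (ys ! i) - fst (xs ! i))\<bar> \<le> d / 2"
        unfolding a_def by (rule round_err[OF d])
      have e2: "\<bar>d * real_of_int (b i) - (snd (ys ! i) - snd (xs ! i))\<bar> \<le> d / 2"
        unfolding b_def by (rule round_err[OF d])
      define u where "u = fst (xs ! i) + d * real_of_int (a i) - fst (ys ! i)"
      define v where "v = snd (xs ! i) + d * real_of_int (b i) - snd (ys ! i)"
      have u: "\<bar>u\<bar> \<le> d / 2" using e1 unfolding u_def by argo
      have v: "\<bar>v\<bar> \<le> d / 2" using e2 unfolding v_def by argo
      have u2: "u^2 \<le> (d/2)^2" using u d by (simp add: abs_le_square_iff[symmetric])
      have v2: "v^2 \<le> (d/2)^2" using v d by (simp add: abs_le_square_iff[symmetric])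
      have "dist (zs ! i) (ys ! i) \<le> dist (fst (xs ! i) + d * real_of_int (a i), snd (xs ! i) + d * real_of_int (b i)) (ys ! i)"
        unfolding zi by (rule clampP_dist[OF ysq[OF i]])
      also have "\<dots> = sqrt (u^2 + v^2)"
        by (cases "ys ! i") (simp add: dist_Pair_Pair dist_real_def u_def v_def)
      also have "\<dots> \<le> sqrt (d^2)" proof (intro real_sqrt_le_mono)
        have "(d/2)^2 = d^2/4" by (simp add: power_divide)
        thus "u^2 + v^2 \<le> d^2" using u2 v2 zero_le_power2[of d] by linarith
      qed
      also have "\<dots> = d" using d by simp
      finally show "dist (zs ! i) (ys ! i) \<le> d" .
    qed simp
    also have "\<dots> = d" using kpos by simp
    finally have "EMD k (F (xs, qs)) T \<le> r / 2" unfolding d_def .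
    hence "T \<in> mball (EMD k) (Xk k) (F (xs, qs)) (r / 2)" unfolding mball_def using T by simp
    thus "T \<in> (\<Union>c\<in>C. mball (EMD k) (Xk k) c (r / 2))" using cC by blast
  qed
  ultimately show ?thesis by blast
qed

lemma poly_bound: "k \<ge> 2 \<Longrightarrow> k ^ k * (4 * k + 3) ^ (2 * k) \<le> k ^ (9 * k)"
proof -
  assume k: "k \<ge> (2::nat)"
  have "(2::nat)^3 \<le> k^3" using k by (rule power_mono) simp
  hence "8 * k \<le> k^3 * k" using k by simp
  moreover have "k^4 = k^3 * k" using power_add[of k 3 1] by simp
  ultimately have "4 * k + 3 \<le> k ^ 4" using k by linarith
  hence "(4 * k + 3) ^ (2 * k) \<le> (k ^ 4) ^ (2 * k)" by (rule power_mono) simp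
  also have "\<dots> = k ^ (8 * k)" by (simp add: power_mult[symmetric])
  finally have "k ^ k * (4 * k + 3) ^ (2 * k) \<le> k ^ k * k ^ (8 * k)" by simp
  also have "\<dots> = k ^ (9 * k)" by (simp add: power_add[symmetric])
  finally show ?thesis .
qed

lemma dconst_le:
  assumes k: "k \<ge> 2"
  shows "doubling_const (EMD k) (Xk k) \<le> enat (k ^ (9 * k))"
proof -
  have "enat (k ^ k * (4 * k + 3) ^ (2 * k)) \<in> {enat n | n. \<forall>x\<in>Xk k. \<forall>r>0. \<exists>C. C \<subseteq> Xk k \<and> finite C \<and> card C \<le> n \<and>
        mball (EMD k) (Xk k) x r \<subseteq> (\<Union>c\<in>C. mball (EMD k) (Xk k) c (r / 2))}"
    using cover[of k] k by auto
  hence "doubling_const (EMD k) (Xk k) \<le> enat (k ^ k * (4 * k + 3) ^ (2 * k))"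
    unfolding doubling_const_def by (rule Inf_lower)
  also have "\<dots> \<le> enat (k ^ (9 * k))" using poly_bound[OF k] by simp
  finally show ?thesis .
qed

theorem mainTheorem8:
  shows "(\<forall>k\<ge>2. metric_diam (EMD k) (Xk k) \<le> ereal (sqrt 2)) \<and>
         (\<exists>C::real. \<forall>k::nat\<ge>2. doubling_dim (EMD k) (Xk k) \<le> ereal (C * real k * ln (real k)))"
proof
  show "\<forall>k\<ge>2. metric_diam (EMD k) (Xk k) \<le> ereal (sqrt 2)" using diam_part by blast
  show "\<exists>C::real. \<forall>k::nat\<ge>2. doubling_dim (EMD k) (Xk k) \<le> ereal (C * real k * ln (real k))"
  proof (intro exI allI impI)
    fix k :: nat assume k: "k \<ge> 2"
    have kr: "real k \<ge> 2" using k by simp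
    have lnk: "ln (real k) \<ge> 0" using kr by simp
    have key: "log 2 (real (k ^ (9 * k))) = 9 / ln 2 * real k * ln (real k)"
      using kr by (simp add: log_def ln_realpow)
    have nn: "0 \<le> 9 / ln 2 * real k * ln (real k)" using lnk kr by simp
    obtain n where n: "doubling_const (EMD k) (Xk k) = enat n" and nle: "n \<le> k ^ (9 * k)"
      using dconst_le[OF k] by (cases "doubling_const (EMD k) (Xk k)") auto
    have "log 2 (real n) \<le> 9 / ln 2 * real k * ln (real k)"
    proof (cases "n = 0")
      case True thus ?thesis using nn by (simp add: log_def)
    next
      case False
      hence "log 2 (real n) \<le> log 2 (real (k ^ (9 * k)))" using nle
        by (subst log_le_cancel_iff) auto
      thus ?thesis using key by simp
    qed
    thus "doubling_dim (EMD k) (Xk k) \<le> ereal (9 / ln 2 * real k * ln (real k))"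
      unfolding doubling_dim_def n by simp
  qed
qed

end
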